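(* Let $\mathcal{H}$ and $\mathcal{K}$ be finite-dimensional complex Hilbert spaces and let $\Psi: B(\mathcal{H})\to B(\mathcal{K})$ be a Hermitian-preserving trace-preserving linear map, with dual (adjoint) map $\Psi^*: B(\mathcal{K})\to B(\mathcal{H})$ defined by $\operatorname{Tr}(\Psi^*(Y)^\dagger X)=\operatorname{Tr}(Y^\dagger\Psi(X))$ for all $X\in B(\mathcal{H})$, $Y\in B(\mathcal{K})$. Then exactly one of the following holds: (1) $\Psi$ is semi-positive, i.e. there is an invertible density matrix $\rho\in B(\mathcal{H})$ such that $\Psi(\rho)$ is an invertible density matrix; (2) $-\Psi^*$ is semi-nonnegative, i.e. there is a density matrix $\sigma\in B(\mathcal{K})$ such that $-\Psi^*(\sigma)$ is positive semidefinite.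
   Context: $B(\mathcal{H})$ denotes all linear operators on $\mathcal{H}$; a density matrix is a positive semidefinite operator of trace one. A map is Hermitian-preserving if $\Psi(X^\dagger)=\Psi(X)^\dagger$ and trace-preserving if $\operatorname{Tr}\Psi(X)=\operatorname{Tr}X$. *)

theory Defs
  imports "HOL-Analysis.Analysis"
begin

text \<open>Operators on a finite-dimensional complex Hilbert space of dimension CARD('n),
  represented as complex CARD('n) x CARD('n) matrices.\<close>

definition mtrace :: "complex^'n^'n \<Rightarrow> complex" where
  "mtrace A = (\<Sum>i\<in>UNIV. A $ i $ i)"

definition madj :: "complex^'n^'m \<Rightarrow> complex^'m^'n" where
  "madj A = (\<chi> i j. cnj (A $ j $ i))"

definition msmult :: "complex \<Rightarrow> complex^'n^'m \<Rightarrow> complex^'n^'m" where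
  "msmult c A = (\<chi> i j. c * A $ i $ j)"

definition psd :: "complex^'n^'n \<Rightarrow> bool" where
  "psd A \<longleftrightarrow> (\<forall>x::complex^'n.
      Im (\<Sum>i\<in>UNIV. cnj (x $ i) * (A *v x) $ i) = 0 \<and>
      Re (\<Sum>i\<in>UNIV. cnj (x $ i) * (A *v x) $ i) \<ge> 0)"

definition density :: "complex^'n^'n \<Rightarrow> bool" where
  "density A \<longleftrightarrow> psd A \<and> mtrace A = 1"

definition lin_map :: "(complex^'n^'n \<Rightarrow> complex^'m^'m) \<Rightarrow> bool" where
  "lin_map \<Psi> \<longleftrightarrow> (\<forall>X Y. \<Psi> (X + Y) = \<Psi> X + \<Psi> Y) \<and> (\<forall>c X. \<Psi> (msmult c X) = msmult c (\<Psi> X))"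

definition herm_pres :: "(complex^'n^'n \<Rightarrow> complex^'m^'m) \<Rightarrow> bool" where
  "herm_pres \<Psi> \<longleftrightarrow> (\<forall>X. \<Psi> (madj X) = madj (\<Psi> X))"

definition trace_pres :: "(complex^'n^'n \<Rightarrow> complex^'m^'m) \<Rightarrow> bool" where
  "trace_pres \<Psi> \<longleftrightarrow> (\<forall>X. mtrace (\<Psi> X) = mtrace X)"

definition is_dual_map :: "(complex^'n^'n \<Rightarrow> complex^'m^'m) \<Rightarrow> (complex^'m^'m \<Rightarrow> complex^'n^'n) \<Rightarrow> bool" where
  "is_dual_map \<Psi> \<Psi>s \<longleftrightarrow> (\<forall>X Y. mtrace (madj (\<Psi>s Y) ** X) = mtrace (madj Y ** \<Psi> X))"

definition semi_positive :: "(complex^'n^'n \<Rightarrow> complex^'m^'m) \<Rightarrow> bool" where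
  "semi_positive \<Psi> \<longleftrightarrow> (\<exists>\<rho>. density \<rho> \<and> invertible \<rho> \<and> density (\<Psi> \<rho>) \<and> invertible (\<Psi> \<rho>))"

definition semi_nonnegative :: "(complex^'m^'m \<Rightarrow> complex^'n^'n) \<Rightarrow> bool" where
  "semi_nonnegative \<Phi> \<longleftrightarrow> (\<exists>\<sigma>. density \<sigma> \<and> psd (\<Phi> \<sigma>))"

end

theory Submission
  imports Defs
begin

definition sf :: "complex^'n^'n \<Rightarrow> complex^'n \<Rightarrow> complex^'n \<Rightarrow> complex" where
  "sf A x y = (\<Sum>i\<in>UNIV. \<Sum>j\<in>UNIV. cnj (x$i) * A$i$j * y$j)"

definition outer :: "complex^'n \<Rightarrow> complex^'n^'n" where
  "outer v = (\<chi> i j. v$i * cnj (v$j))"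

lemma qf_eq: "(\<Sum>i\<in>UNIV. cnj (x $ i) * (A *v x) $ i) = sf A x x"
  by (simp add: sf_def matrix_vector_mult_def sum_distrib_left mult.assoc)

lemma psd_iff: "psd A \<longleftrightarrow> (\<forall>x. Im (sf A x x) = 0 \<and> Re (sf A x x) \<ge> 0)"
  unfolding psd_def qf_eq by simp

lemma sf_add1: "sf A (x + y) z = sf A x z + sf A y z"
  by (simp add: sf_def distrib_left distrib_right sum.distrib)
lemma sf_add2: "sf A x (y + z) = sf A x y + sf A x z"
  by (simp add: sf_def distrib_left distrib_right sum.distrib)
lemma sf_addM: "sf (A + B) x y = sf A x y + sf B x y"
  by (simp add: sf_def distrib_left distrib_right sum.distrib)
lemma sf_diffM: "sf (A - B) x y = sf A x y - sf B x y"
  by (simp add: sf_def algebra_simps sum_subtractf)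
lemma sf_negM: "sf (- A) x y = - sf A x y"
  by (simp add: sf_def sum_negf)
lemma sf_zeroM: "sf 0 x y = 0"
  by (simp add: sf_def)
lemma sf_alt: "sf A x y = (\<Sum>i\<in>UNIV. cnj (x$i) * (\<Sum>j\<in>UNIV. A$i$j * y$j))"
  by (simp add: sf_def sum_distrib_left mult.assoc)
lemma sf_alt2: "sf A x y = (\<Sum>j\<in>UNIV. (\<Sum>i\<in>UNIV. cnj (x$i) * A$i$j) * y$j)"
  unfolding sf_def sum_distrib_right by (subst sum.swap) (simp add: mult.assoc)
lemma sf_axis1: "sf A (axis i t) y = cnj t * (\<Sum>j\<in>UNIV. A$i$j * y$j)"
proof -
  have "sf A (axis i t) y = (\<Sum>k\<in>UNIV. if k = i then cnj t * (\<Sum>j\<in>UNIV. A$k$j * y$j) else 0)"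
    unfolding sf_alt by (rule sum.cong) (auto simp: axis_def)
  then show ?thesis by simp
qed
lemma sf_axis2: "sf A x (axis j t) = t * (\<Sum>i\<in>UNIV. cnj (x$i) * A$i$j)"
proof -
  have "sf A x (axis j t) = (\<Sum>k\<in>UNIV. if k = j then (\<Sum>i\<in>UNIV. cnj (x$i) * A$i$k) * t else 0)"
    unfolding sf_alt2 by (rule sum.cong) (auto simp: axis_def)
  then show ?thesis by (simp add: mult.commute)
qed
lemma sf_axis_axis: "sf A (axis i s) (axis j t) = cnj s * A$i$j * t"
proof -
  have "(\<Sum>k\<in>UNIV. A$i$k * axis j t $ k) = (\<Sum>k\<in>UNIV. if k = j then A$i$k * t else 0)"
    by (rule sum.cong) (auto simp: axis_def)
  then show ?thesis by (simp add: sf_axis1)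
qed

lemma sf_outer: "sf (outer v) x y = cnj (\<Sum>i\<in>UNIV. cnj (v$i) * x$i) * (\<Sum>j\<in>UNIV. cnj (v$j) * y$j)"
proof -
  have "sf (outer v) x y = (\<Sum>j\<in>UNIV. (\<Sum>i\<in>UNIV. cnj (x$i) * v$i) * (cnj (v$j) * y$j))"
    unfolding sf_alt2 outer_def by (simp add: sum_distrib_right sum_distrib_left algebra_simps)
  also have "\<dots> = (\<Sum>i\<in>UNIV. cnj (x$i) * v$i) * (\<Sum>j\<in>UNIV. cnj (v$j) * y$j)"
    by (simp add: sum_distrib_left)
  finally show ?thesis by (simp add: mult.commute)
qed


definition herm :: "complex^'n^'n \<Rightarrow> bool" where
  "herm A \<longleftrightarrow> (\<forall>i j. A$i$j = cnj (A$j$i))"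

lemma sf_expand: "sf A (x + y) (x + y) = sf A x x + sf A x y + sf A y x + sf A y y"
  by (simp add: sf_add1 sf_add2)

lemma psd_diag: assumes "psd A" shows "Im (A$i$i) = 0" "Re (A$i$i) \<ge> 0"
proof -
  have "sf A (axis i 1) (axis i 1) = A$i$i" by (simp add: sf_axis_axis)
  then show "Im (A$i$i) = 0" "Re (A$i$i) \<ge> 0" using assms unfolding psd_iff by metis+
qed

lemma psd_herm: assumes "psd A" shows "herm A"
  unfolding herm_def
proof (intro allI)
  fix i j
  have 1: "Im (sf A (axis i 1 + axis j 1) (axis i 1 + axis j 1)) = 0"
    and 2: "Im (sf A (axis i 1 + axis j \<i>) (axis i 1 + axis j \<i>)) = 0"
    using assms unfolding psd_iff by auto
  have d1: "Im (A$i$i) = 0" "Im (A$j$j) = 0" using psd_diag[OF assms] by auto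
  have e1: "sf A (axis i 1 + axis j 1) (axis i 1 + axis j 1) = A$i$i + A$i$j + A$j$i + A$j$j"
    by (simp add: sf_expand sf_axis_axis)
  have e2: "sf A (axis i 1 + axis j \<i>) (axis i 1 + axis j \<i>) = A$i$i + \<i> * A$i$j - \<i> * A$j$i + A$j$j"
    by (simp add: sf_expand sf_axis_axis algebra_simps)
  from 1 2 d1 have "Im (A$i$j) + Im (A$j$i) = 0" "Re (A$i$j) - Re (A$j$i) = 0"
    unfolding e1 e2 by simp_all
  then show "A$i$j = cnj (A$j$i)" by (simp add: complex_eq_iff)
qed

lemma sf_herm_conj: assumes "herm A" shows "sf A y x = cnj (sf A x y)"
proof -
  have h: "cnj (A$i$j) = A$j$i" for i j using assms unfolding herm_def by (metis complex_cnj_cnj)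
  have "cnj (sf A x y) = (\<Sum>i\<in>UNIV. \<Sum>j\<in>UNIV. x$i * A$j$i * cnj (y$j))"
    unfolding sf_def by (simp add: h)
  also have "\<dots> = sf A y x" unfolding sf_def by (subst sum.swap) (simp add: algebra_simps)
  finally show ?thesis by simp
qed

lemma sf_herm_real: "herm A \<Longrightarrow> Im (sf A x x) = 0"
proof -
  assume "herm A"
  then have "sf A x x = cnj (sf A x x)" by (rule sf_herm_conj)
  then show ?thesis by (metis complex_cnj_cancel_iff complex_is_Real_iff Reals_cnj_iff)
qed

lemma sf_axis_expand:
  assumes "herm A" and b_def: "b = (\<Sum>j\<in>UNIV. A$i$j * x$j)"
  shows "sf A (x + axis i t) (x + axis i t) = sf A x x + cnj t * b + t * cnj b + cnj t * A$i$i * t"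
proof -
  have "sf A (axis i t) x = cnj t * b" by (simp add: sf_axis1 b_def)
  moreover have "sf A x (axis i t) = t * cnj b"
    using sf_herm_conj[OF assms(1), of "axis i t" x] \<open>sf A (axis i t) x = cnj t * b\<close>
    by (metis complex_cnj_cnj complex_cnj_mult)
  ultimately show ?thesis by (simp add: sf_expand sf_axis_axis)
qed


lemma sum_axis_right: "(\<Sum>k\<in>UNIV. (A::complex^'n^'n)$i$k * axis j s $ k) = A$i$j * s"
proof -
  have "(\<Sum>k\<in>UNIV. A$i$k * axis j s $ k) = (\<Sum>k\<in>UNIV. if k = j then A$i$k * s else 0)"
    by (rule sum.cong) (auto simp: axis_def)
  then show ?thesis by simp
qed

lemma psd_row_zero: assumes "psd A" "A$i$i = 0" shows "A$i$j = 0"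
proof (rule ccontr)
  assume nz: "A$i$j \<noteq> 0"
  define b where "b = A$i$j"
  have hA: "herm A" using psd_herm[OF assms(1)] .
  define r where "r = (Re (A$j$j) + 1) / (2 * (cmod b)^2)"
  have bpos: "(cmod b)^2 > 0" using nz b_def by simp
  define t where "t = - (of_real r * b)"
  have bb: "b * cnj b = of_real ((cmod b)^2)" by (rule complex_norm_square[symmetric])
  have "sf A (axis j 1 + axis i t) (axis j 1 + axis i t) = A$j$j + cnj t * b + t * cnj b"
    using sf_axis_expand[OF hA, of b i "axis j 1" t] assms(2)
    by (simp add: sum_axis_right b_def sf_axis_axis)
  also have "\<dots> = A$j$j - 2 * of_real r * of_real ((cmod b)^2)"
    unfolding t_def bb[symmetric] by (simp add: algebra_simps)
  finally have "Re (sf A (axis j 1 + axis i t) (axis j 1 + axis i t)) = Re (A$j$j) - 2 * r * (cmod b)^2"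
    by simp
  moreover have "2 * r * (cmod b)^2 = Re (A$j$j) + 1" unfolding r_def using bpos by simp
  ultimately have "Re (sf A (axis j 1 + axis i t) (axis j 1 + axis i t)) = -1" by simp
  then show False using assms(1) unfolding psd_iff by (metis neg_0_le_iff_le not_one_le_zero)
qed


lemma psd_deflate:
  assumes "psd A" "A$i$i \<noteq> 0"
    and c_def: "c = (\<chi> k. A$k$i / of_real (sqrt (Re (A$i$i))))"
  shows "psd (A - outer c)" "(A - outer c)$i$i = 0" "\<And>k. A$k$k = 0 \<Longrightarrow> (A - outer c)$k$k = 0"
proof -
  define a where "a = Re (A$i$i)"
  have hA: "herm A" using psd_herm[OF assms(1)] .
  have h: "cnj (A$p$q) = A$q$p" for p q using hA unfolding herm_def by (metis complex_cnj_cnj)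
  have Aii: "A$i$i = of_real a" using psd_diag[OF assms(1), of i] a_def by (simp add: complex_eq_iff)
  have "a \<noteq> 0" using assms(2) Aii by auto
  then have apos: "a > 0" using psd_diag[OF assms(1), of i] a_def by linarith
  have sq: "of_real (sqrt a) * of_real (sqrt a) = (of_real a :: complex)"
  proof -
    have "sqrt a * sqrt a = a" using apos by simp
    then show ?thesis by (metis of_real_mult)
  qed
  have sqnz: "(of_real (sqrt a) :: complex) \<noteq> 0" using apos by simp
  have cc: "c$k * cnj (c$k) = A$k$i * A$i$k / of_real a" for k
    unfolding c_def a_def[symmetric] using sq by (simp add: h)
  show "psd (A - outer c)"
    unfolding psd_iff
  proof
    fix x
    define b where "b = (\<Sum>j\<in>UNIV. A$i$j * x$j)"
    define t where "t = - b / of_real a"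
    have w: "(\<Sum>j\<in>UNIV. cnj (c$j) * x$j) = b / of_real (sqrt a)"
      unfolding b_def c_def a_def[symmetric] by (simp add: h sum_divide_distrib)
    have so: "sf (outer c) x x = cnj b * b / of_real a"
      unfolding sf_outer w using sq by simp
    have "sf A (x + axis i t) (x + axis i t) = sf A x x + cnj t * b + t * cnj b + cnj t * A$i$i * t"
      using sf_axis_expand[OF hA b_def] .
    also have "\<dots> = sf A x x - cnj b * b / of_real a"
      unfolding t_def Aii using apos by (simp add: field_simps)
    also have "\<dots> = sf (A - outer c) x x" by (simp add: sf_diffM so)
    finally have eq: "sf A (x + axis i t) (x + axis i t) = sf (A - outer c) x x" .
    have "Im (sf A (x + axis i t) (x + axis i t)) = 0 \<and> 0 \<le> Re (sf A (x + axis i t) (x + axis i t))"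
      using assms(1) unfolding psd_iff by blast
    then show "Im (sf (A - outer c) x x) = 0 \<and> 0 \<le> Re (sf (A - outer c) x x)"
      unfolding eq .
  qed
  show "(A - outer c)$i$i = 0"
    using cc[of i] apos Aii by (simp add: outer_def)
  show "(A - outer c)$k$k = 0" if "A$k$k = 0" for k
    using cc[of k] psd_row_zero[OF assms(1) that, of i] that by (simp add: outer_def)
qed


lemma psd_decomp_aux:
  "\<forall>A::complex^'n^'n. psd A \<and> card {k. A$k$k \<noteq> 0} = m \<longrightarrow> (\<exists>vs. A = sum_list (map outer vs))"
proof (induction m rule: less_induct)
  case (less m)
  show ?case
  proof (intro allI impI)
    fix A :: "complex^'n^'n"
    assume a: "psd A \<and> card {k. A$k$k \<noteq> 0} = m"
    show "\<exists>vs. A = sum_list (map outer vs)"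
    proof (cases "{k. A$k$k \<noteq> 0} = {}")
      case True
      then have "A$k$j = 0" for k j using psd_row_zero[of A k j] a by auto
      then have "A = 0" by (simp add: vec_eq_iff)
      then show ?thesis by (intro exI[of _ "[]"]) simp
    next
      case False
      then obtain i where i: "A$i$i \<noteq> 0" by auto
      define c where "c = (\<chi> k. A$k$i / of_real (sqrt (Re (A$i$i))))"
      note d = psd_deflate[OF _ i c_def]
      have sub: "{k. (A - outer c)$k$k \<noteq> 0} \<subseteq> {k. A$k$k \<noteq> 0} - {i}"
        using d(2,3) a by auto
      have "card {k. (A - outer c)$k$k \<noteq> 0} < m"
      proof -
        have "card {k. (A - outer c)$k$k \<noteq> 0} \<le> card ({k. A$k$k \<noteq> 0} - {i})"
          by (rule card_mono[OF _ sub]) simp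
        also have "\<dots> < card {k. A$k$k \<noteq> 0}"
          using i by (intro card_Diff1_less) auto
        finally show ?thesis using a by simp
      qed
      then obtain vs where "A - outer c = sum_list (map outer vs)"
        using less.IH d(1) a by blast
      then have "A = sum_list (map outer (c # vs))" by (simp add: algebra_simps)
      then show ?thesis by blast
    qed
  qed
qed

lemma psd_decomp: "psd A \<Longrightarrow> \<exists>vs. A = sum_list (map outer vs)"
  using psd_decomp_aux by blast


lemma matrix_add_rdistrib': "((A::complex^'n^'n) + B) ** C = A ** C + B ** C"
  by (simp add: matrix_matrix_mult_def vec_eq_iff distrib_right sum.distrib)

lemma mtrace_add: "mtrace (A + B) = mtrace A + mtrace B"
  by (simp add: mtrace_def sum.distrib)

lemma mtrace_zero: "mtrace 0 = 0"
  by (simp add: mtrace_def)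

lemma mtrace_outer_left: "mtrace (outer v ** B) = sf B v v"
  unfolding mtrace_def sf_def outer_def matrix_matrix_mult_def
  by (simp add: sum_distrib_left) (subst sum.swap, simp add: algebra_simps)

lemma mtrace_outer_right: "mtrace (madj M ** outer w) = cnj (sf M w w)"
  unfolding mtrace_def sf_def outer_def matrix_matrix_mult_def madj_def
  by (simp add: sum_distrib_left) (subst sum.swap, simp add: algebra_simps)

lemma mtrace_sum_left: "mtrace (sum_list (map outer vs) ** B) = (\<Sum>v\<leftarrow>vs. sf B v v)"
  by (induction vs) (simp_all add: matrix_add_rdistrib' mtrace_add mtrace_zero mtrace_outer_left)

lemma mtrace_sum_right: "mtrace (madj M ** sum_list (map outer ws)) = (\<Sum>w\<leftarrow>ws. cnj (sf M w w))"
  by (induction ws) (simp_all add: matrix_add_ldistrib mtrace_add mtrace_zero mtrace_outer_right)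

definition pd :: "complex^'n^'n \<Rightarrow> bool" where
  "pd A \<longleftrightarrow> (\<forall>x. Im (sf A x x) = 0 \<and> (x \<noteq> 0 \<longrightarrow> Re (sf A x x) > 0))"

lemma pd_psd: "pd A \<Longrightarrow> psd A"
proof -
  assume a: "pd A"
  have "sf A 0 0 = 0" by (simp add: sf_def)
  then show "psd A" using a unfolding pd_def psd_iff by (metis less_eq_real_def order_refl zero_complex.simps(1))
qed


lemma Re_sum_list: "Re (\<Sum>v\<leftarrow>vs. f v) = (\<Sum>v\<leftarrow>vs. Re (f v))"
  by (induction vs) simp_all
lemma Im_sum_list: "Im (\<Sum>v\<leftarrow>vs. f v) = (\<Sum>v\<leftarrow>vs. Im (f v))"
  by (induction vs) simp_all
lemma cnj_sum_list: "cnj (\<Sum>v\<leftarrow>vs. f v) = (\<Sum>v\<leftarrow>vs. cnj (f v))"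
  by (induction vs) simp_all

lemma member_le_sum_list_map:
  fixes f :: "'a \<Rightarrow> real"
  shows "(\<forall>v\<in>set vs. 0 \<le> f v) \<Longrightarrow> v \<in> set vs \<Longrightarrow> f v \<le> (\<Sum>w\<leftarrow>vs. f w)"
proof (induction vs)
  case (Cons a vs)
  have "0 \<le> (\<Sum>w\<leftarrow>vs. f w)" using Cons.prems(1) by (intro sum_list_nonneg) auto
  then show ?case using Cons by auto
qed simp

lemma sf_sum_list: "sf (sum_list (map outer vs)) x y = (\<Sum>v\<leftarrow>vs. sf (outer v) x y)"
  by (induction vs) (simp_all add: sf_addM sf_zeroM)

lemma sf_outer_self: "sf (outer v) x x = of_real ((cmod (\<Sum>i\<in>UNIV. cnj (v$i) * x$i))^2)"
  unfolding sf_outer complex_norm_square by (simp add: mult.commute)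

lemma psd_inv_pd: assumes "psd A" "invertible A" shows "pd A"
  unfolding pd_def
proof (intro allI conjI impI)
  fix x :: "complex^'a"
  show "Im (sf A x x) = 0" using assms(1) unfolding psd_iff by blast
  assume xnz: "x \<noteq> 0"
  show "Re (sf A x x) > 0"
  proof (rule ccontr)
    assume "\<not> Re (sf A x x) > 0"
    then have z: "Re (sf A x x) = 0" using assms(1) unfolding psd_iff by (meson not_less order_antisym)
    obtain vs where vs: "A = sum_list (map outer vs)" using psd_decomp[OF assms(1)] by blast
    define w where "w = (\<lambda>v y::complex^'a. \<Sum>i\<in>UNIV. cnj (v$i) * y$i)"
    have rs: "Re (sf A x x) = (\<Sum>v\<leftarrow>vs. (cmod (w v x))^2)"
      unfolding vs sf_sum_list Re_sum_list sf_outer_self w_def by simp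
    then have "\<forall>v\<in>set vs. (cmod (w v x))^2 = 0"
    proof -
      have "(\<Sum>v\<leftarrow>vs. (cmod (w v x))^2) = 0" using z rs by simp
      moreover have "\<And>y. y \<in> set (map (\<lambda>v. (cmod (w v x))^2) vs) \<Longrightarrow> 0 \<le> y" by auto
      ultimately show ?thesis using sum_list_nonneg_eq_0_iff[of "map (\<lambda>v. (cmod (w v x))^2) vs"] by auto
    qed
    then have w0: "\<forall>v\<in>set vs. w v x = 0" by simp
    have "(A *v x) $ k = 0" for k
    proof -
      have "(A *v x) $ k = sf A (axis k 1) x"
        by (simp add: sf_axis1 matrix_vector_mult_def)
      also have "\<dots> = (\<Sum>v\<leftarrow>vs. cnj (w v (axis k 1)) * w v x)"
        unfolding vs sf_sum_list sf_outer w_def by simp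
      also have "\<dots> = 0" using w0 by (induction vs) auto
      finally show ?thesis .
    qed
    then have "A *v x = 0" by (simp add: vec_eq_iff)
    moreover obtain B where "B ** A = mat 1" using assms(2) unfolding invertible_def by blast
    ultimately have "x = 0" by (metis matrix_vector_mul_assoc matrix_vector_mul_lid matrix_vector_mult_0_right)
    then show False using xnz by simp
  qed
qed

lemma pd_inv: assumes "pd A" shows "invertible A"
proof -
  have "\<forall>x. A *v x = 0 \<longrightarrow> x = 0"
  proof (intro allI impI)
    fix x assume "A *v x = 0"
    then have "sf A x x = 0" using qf_eq[of x A] by simp
    then show "x = 0" using assms unfolding pd_def by fastforce
  qed
  then obtain B where "B ** A = mat 1" using matrix_left_invertible_ker by blast
  then show ?thesis unfolding invertible_def using matrix_left_right_inverse by blast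
qed

lemma tr_pos:
  assumes "psd S" "S \<noteq> 0" "pd B"
  shows "Re (mtrace (S ** B)) > 0"
proof -
  obtain vs where vs: "S = sum_list (map outer vs)" using psd_decomp[OF assms(1)] by blast
  have "\<exists>v\<in>set vs. v \<noteq> 0"
  proof (rule ccontr)
    assume "\<not> ?thesis"
    then have "S = 0" unfolding vs by (induction vs) (auto simp: outer_def zero_vec_def)
    then show False using assms(2) by simp
  qed
  then obtain v where v: "v \<in> set vs" "v \<noteq> 0" by blast
  have nn: "\<forall>u\<in>set vs. 0 \<le> Re (sf B u u)" using pd_psd[OF assms(3)] unfolding psd_iff by blast
  have "Re (mtrace (S ** B)) = (\<Sum>u\<leftarrow>vs. Re (sf B u u))"
    unfolding vs mtrace_sum_left Re_sum_list ..
  moreover have "Re (sf B v v) \<le> (\<Sum>u\<leftarrow>vs. Re (sf B u u))"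
    by (rule member_le_sum_list_map[OF nn v(1)])
  moreover have "Re (sf B v v) > 0" using assms(3) v(2) unfolding pd_def by blast
  ultimately show ?thesis by linarith
qed


lemma herm_madj: "herm A \<longleftrightarrow> madj A = A"
proof
  assume "herm A"
  then have h: "cnj (A$p$q) = A$q$p" for p q unfolding herm_def by (metis complex_cnj_cnj)
  show "madj A = A" unfolding madj_def vec_eq_iff by (simp add: h)
next
  assume "madj A = A"
  then have "(madj A)$i$j = A$i$j" for i j by simp
  then show "herm A" unfolding herm_def madj_def by simp
qed

lemma madj_madj: "madj (madj A) = A"
  by (simp add: madj_def vec_eq_iff)

lemma scaleR_entry: "(r *\<^sub>R (A::complex^'n^'m))$i$j = of_real r * A$i$j"
  by (simp add: scaleR_conv_of_real[where 'a=complex])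

lemma cnj_eq_Im: "cnj z = z \<Longrightarrow> Im z = 0"
proof -
  assume h: "cnj z = z"
  have "Im (cnj z) = Im z" using h by simp
  then show ?thesis by simp
qed

lemma sf_scaleR: "sf (r *\<^sub>R A) x y = of_real r * sf A x y"
  by (simp add: sf_def sum_distrib_left scaleR_entry algebra_simps scaleR_conv_of_real[where 'a=complex])

lemma msmult_of_real: "msmult (of_real r) X = r *\<^sub>R X"
  by (simp add: msmult_def vec_eq_iff scaleR_entry scaleR_conv_of_real[where 'a=complex])

lemma lin_props:
  assumes "lin_map \<Psi>"
  shows "\<Psi> (X + Y) = \<Psi> X + \<Psi> Y" "\<Psi> (r *\<^sub>R X) = r *\<^sub>R \<Psi> X" "\<Psi> 0 = 0"
proof -
  show "\<Psi> (X + Y) = \<Psi> X + \<Psi> Y" using assms unfolding lin_map_def by blast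
  show sc: "\<Psi> (r *\<^sub>R X) = r *\<^sub>R \<Psi> X" for r X
    using assms unfolding lin_map_def by (metis msmult_of_real)
  show "\<Psi> 0 = 0" using sc[of 0] by simp
qed

lemma inner_mat: "inner (X::complex^'n^'n) Y = Re (\<Sum>i\<in>UNIV. \<Sum>j\<in>UNIV. cnj (X$i$j) * Y$i$j)"
  by (simp add: inner_vec_def inner_complex_def Re_sum)

lemma inner_madj: "inner (madj X) (madj Y) = inner (X::complex^'n^'n) Y"
  unfolding inner_mat madj_def by (simp, subst sum.swap, simp)

lemma inner_herm_outer: assumes "herm Z" shows "inner Z (outer x) = Re (sf Z x x)"
proof -
  have h: "cnj (Z$p$q) = Z$q$p" for p q using assms unfolding herm_def by (metis complex_cnj_cnj)
  have "(\<Sum>i\<in>UNIV. \<Sum>j\<in>UNIV. cnj (Z$i$j) * outer x$i$j) = (\<Sum>i\<in>UNIV. \<Sum>j\<in>UNIV. cnj (x$j) * Z$j$i * x$i)"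
    unfolding outer_def by (simp add: h algebra_simps)
  also have "\<dots> = sf Z x x" unfolding sf_def by (subst sum.swap) simp
  finally show ?thesis unfolding inner_mat by simp
qed

lemma inner_mat1: "inner Z (mat 1 :: complex^'n^'n) = Re (mtrace Z)"
proof -
  have "(\<Sum>i\<in>UNIV. \<Sum>j\<in>UNIV. cnj (Z$i$j) * (mat 1 :: complex^'n^'n)$i$j) = (\<Sum>i\<in>UNIV. cnj (Z$i$i))"
    by (rule sum.cong) (simp_all add: mat_def if_distrib cong: if_cong)
  then show ?thesis unfolding inner_mat mtrace_def by (simp add: Re_sum)
qed

lemma re_tr_inner: "Re (mtrace (madj X ** Y)) = inner X (Y::complex^'n^'n)"
  unfolding inner_mat mtrace_def madj_def matrix_matrix_mult_def
  by (simp add: Re_sum, subst sum.swap, simp)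

lemma mtrace_herm_real: assumes "herm A" "herm B" shows "Im (mtrace (A ** B)) = 0"
proof -
  have hA: "cnj (A$p$q) = A$q$p" for p q using assms(1) unfolding herm_def by (metis complex_cnj_cnj)
  have hB: "cnj (B$p$q) = B$q$p" for p q using assms(2) unfolding herm_def by (metis complex_cnj_cnj)
  have "cnj (mtrace (A ** B)) = (\<Sum>i\<in>UNIV. \<Sum>k\<in>UNIV. A$k$i * B$i$k)"
    unfolding mtrace_def matrix_matrix_mult_def by (simp add: hA hB)
  also have "\<dots> = mtrace (A ** B)"
    unfolding mtrace_def matrix_matrix_mult_def by (simp, subst sum.swap, simp add: mult.commute)
  finally show ?thesis by (rule cnj_eq_Im)
qed

lemma sf_mat1: "sf (mat 1) x x = of_real (\<Sum>i\<in>UNIV. (cmod (x$i))^2)"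
proof -
  have "sf (mat 1) x x = (\<Sum>i\<in>UNIV. cnj (x$i) * x$i)"
    unfolding sf_alt using matrix_vector_mul_lid[of x] unfolding matrix_vector_mult_def vec_eq_iff by simp
  then show ?thesis by (simp add: complex_norm_square[symmetric] mult.commute of_real_sum)
qed

lemma pd_mat1: "pd (mat 1)"
  unfolding pd_def
proof (intro allI conjI impI)
  fix x :: "complex^'n"
  show "Im (sf (mat 1) x x) = 0" by (simp add: sf_mat1)
  assume "x \<noteq> 0"
  then obtain i where "x$i \<noteq> 0" by (auto simp: vec_eq_iff)
  then have "0 < (cmod (x$i))^2" by simp
  also have "\<dots> \<le> (\<Sum>i\<in>UNIV. (cmod (x$i))^2)" by (rule member_le_sum) auto
  finally show "Re (sf (mat 1) x x) > 0" by (simp add: sf_mat1)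
qed

lemma pd_add: "pd A \<Longrightarrow> pd B \<Longrightarrow> pd (A + B)"
  unfolding pd_def by (simp add: sf_addM add_pos_pos)

lemma pd_scale: "pd A \<Longrightarrow> r > 0 \<Longrightarrow> pd (r *\<^sub>R A)"
  unfolding pd_def by (simp add: sf_scaleR)

lemma psd_add: "psd A \<Longrightarrow> psd B \<Longrightarrow> psd (A + B)"
  unfolding psd_iff by (simp add: sf_addM)

lemma psd_scale: "psd A \<Longrightarrow> r \<ge> 0 \<Longrightarrow> psd (r *\<^sub>R A)"
  unfolding psd_iff by (simp add: sf_scaleR)

lemma psd_outer: "psd (outer x)"
  unfolding psd_iff sf_outer_self by simp

lemma pd_psd_add: "pd A \<Longrightarrow> psd B \<Longrightarrow> pd (A + B)"
  unfolding pd_def psd_iff by (simp add: sf_addM add_pos_nonneg)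

lemma pd_outer_eps: "e > 0 \<Longrightarrow> pd (outer x + e *\<^sub>R mat 1)"
  using pd_psd_add[OF pd_scale[OF pd_mat1] psd_outer] by (simp add: add.commute)

lemma herm_outer: "herm (outer x)"
  unfolding herm_def outer_def by simp

lemma diag_sf: "A$i$i = sf A (axis i 1) (axis i 1)"
  by (simp add: sf_axis_axis)


lemma madj_add: "madj (A + B) = madj A + madj B"
  by (simp add: madj_def vec_eq_iff)
lemma madj_diff: "madj (A - B) = madj A - madj B"
  by (simp add: madj_def vec_eq_iff)
lemma madj_neg: "madj (- A) = - madj A"
  by (simp add: madj_def vec_eq_iff)
lemma madj_scaleR: "madj (r *\<^sub>R A) = r *\<^sub>R madj A"
  by (simp add: madj_def vec_eq_iff scaleR_entry)
lemma madj_zero: "madj 0 = 0"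
  by (simp add: madj_def vec_eq_iff)

lemma mtrace_scaleR: "mtrace (r *\<^sub>R A) = of_real r * mtrace A"
  by (simp add: mtrace_def scaleR_entry sum_distrib_left scaleR_conv_of_real[where 'a=complex])

lemma sf_neg_arg: "sf (- A) x x = - sf A x x"
  by (rule sf_negM)

lemma herm_Psi: "herm_pres \<Psi> \<Longrightarrow> herm X \<Longrightarrow> herm (\<Psi> X)"
  unfolding herm_pres_def herm_madj by metis

lemma pd_herm: "pd A \<Longrightarrow> herm A"
  using pd_psd psd_herm by blast

lemma pd_comb:
  assumes "pd A" "pd B" "u \<ge> 0" "v \<ge> 0" "u + v = 1"
  shows "pd (u *\<^sub>R A + v *\<^sub>R B)"
  unfolding pd_def
proof (intro allI conjI impI)
  fix x
  show "Im (sf (u *\<^sub>R A + v *\<^sub>R B) x x) = 0"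
    using assms(1,2) unfolding pd_def by (simp add: sf_addM sf_scaleR)
  assume "x \<noteq> 0"
  then have a: "Re (sf A x x) > 0" "Re (sf B x x) > 0" using assms(1,2) unfolding pd_def by auto
  have "u * Re (sf A x x) + v * Re (sf B x x) > 0"
  proof (cases "u > 0")
    case True
    then show ?thesis using a assms(4) by (simp add: add_pos_nonneg)
  next
    case False
    then have "v > 0" using assms by auto
    then show ?thesis using a assms(3) by (simp add: add_nonneg_pos)
  qed
  then show "Re (sf (u *\<^sub>R A + v *\<^sub>R B) x x) > 0" by (simp add: sf_addM sf_scaleR)
qed

lemma real_L1: fixes c d :: real assumes "\<forall>r>0. r * d \<le> c" shows "d \<le> 0"
proof (rule ccontr)
  assume "\<not> d \<le> 0"
  then have d: "d > 0" by simp
  have "((\<bar>c\<bar> + 1) / d) * d \<le> c" using assms d by (metis add_pos_pos abs_ge_zero zero_less_one divide_pos_pos add_nonneg_pos)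
  then show False using d by simp
qed

lemma real_L2: fixes c d :: real assumes "\<forall>e>0. e * d \<le> c" shows "c \<ge> 0"
proof (rule ccontr)
  assume "\<not> c \<ge> 0"
  then have c: "c < 0" by simp
  have "1 * d \<le> c" using assms[rule_format, of 1] by simp
  then have d: "d < 0" using c by simp
  have e: "c / (2 * d) > 0" using c d by (simp add: divide_neg_neg)
  have "(c / (2 * d)) * d \<le> c" using assms e by blast
  then show False using c d by (simp add: field_simps)
qed

lemma mtrace_pd: assumes "pd A" shows "Im (mtrace A) = 0" "Re (mtrace A) > 0"
proof -
  have d: "A$i$i = sf A (axis i 1) (axis i 1)" for i by (rule diag_sf)
  have nz: "axis i (1::complex) \<noteq> 0" for i :: 'a by (simp add: axis_eq_0_iff)
  show "Im (mtrace A) = 0" unfolding mtrace_def Im_sum using assms unfolding pd_def d by simp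
  have "Re (A$i$i) > 0" for i using assms nz unfolding pd_def d by blast
  then show "Re (mtrace A) > 0" unfolding mtrace_def Re_sum by (intro sum_pos) auto
qed


lemma exclusive:
  fixes \<Psi> :: "complex^'n^'n \<Rightarrow> complex^'m^'m"
    and \<Psi>s :: "complex^'m^'m \<Rightarrow> complex^'n^'n"
  assumes "is_dual_map \<Psi> \<Psi>s" "semi_positive \<Psi>" "semi_nonnegative (\<lambda>Y. - \<Psi>s Y)"
  shows False
proof -
  obtain \<rho> where r: "density \<rho>" "invertible \<rho>" "density (\<Psi> \<rho>)" "invertible (\<Psi> \<rho>)"
    using assms(2) unfolding semi_positive_def by blast
  obtain \<sigma> where s: "density \<sigma>" "psd (- \<Psi>s \<sigma>)"
    using assms(3) unfolding semi_nonnegative_def by blast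
  have pdP: "pd (\<Psi> \<rho>)" using r(3,4) psd_inv_pd unfolding density_def by blast
  have snz: "\<sigma> \<noteq> 0" using s(1) unfolding density_def by (auto simp: mtrace_zero)
  have hs: "madj \<sigma> = \<sigma>" using s(1) psd_herm herm_madj unfolding density_def by blast
  have gt: "Re (mtrace (\<sigma> ** \<Psi> \<rho>)) > 0"
    using tr_pos[OF _ snz pdP] s(1) unfolding density_def by blast
  have eq: "mtrace (madj (\<Psi>s \<sigma>) ** \<rho>) = mtrace (madj \<sigma> ** \<Psi> \<rho>)"
    using assms(1) unfolding is_dual_map_def by blast
  obtain ws where ws: "\<rho> = sum_list (map outer ws)" using psd_decomp r(1) unfolding density_def by blast
  have "Re (mtrace (madj (\<Psi>s \<sigma>) ** \<rho>)) = (\<Sum>w\<leftarrow>ws. Re (sf (\<Psi>s \<sigma>) w w))"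
    unfolding ws mtrace_sum_right Re_sum_list by simp
  also have "\<dots> \<le> 0"
  proof (rule sum_list_nonpos)
    fix y assume "y \<in> set (map (\<lambda>w. Re (sf (\<Psi>s \<sigma>) w w)) ws)"
    then obtain w where "y = Re (sf (\<Psi>s \<sigma>) w w)" by auto
    moreover have "Re (sf (- \<Psi>s \<sigma>) w w) \<ge> 0" using s(2) unfolding psd_iff by blast
    ultimately show "y \<le> 0" by (simp add: sf_negM)
  qed
  finally show False using gt eq hs by simp
qed


lemma separation:
  fixes \<Psi> :: "complex^'n^'n \<Rightarrow> complex^'m^'m"
    and \<Psi>s :: "complex^'m^'m \<Rightarrow> complex^'n^'n"
  assumes lin: "lin_map \<Psi>" and hp: "herm_pres \<Psi>" and tp: "trace_pres \<Psi>"
    and du: "is_dual_map \<Psi> \<Psi>s" and nsp: "\<not> semi_positive \<Psi>"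
  shows "semi_nonnegative (\<lambda>Y. - \<Psi>s Y)"
proof -
  note L = lin_props[OF lin]
  define S :: "(complex^'m^'m) set" where
    "S = {\<Psi> \<rho> - P + K | \<rho> P K. pd \<rho> \<and> pd P \<and> madj K = - K}"
  have memS: "\<Psi> \<rho> - P + K \<in> S" if "pd \<rho>" "pd P" "madj K = - K" for \<rho> P K
    unfolding S_def using that by blast
  have cS: "convex S"
  proof (rule convexI)
    fix x y and u v :: real
    assume x: "x \<in> S" and y: "y \<in> S" and uv0: "0 \<le> u" "0 \<le> v" "u + v = 1"
    note uv = uv0
    obtain \<rho>1 P1 K1 where 1: "x = \<Psi> \<rho>1 - P1 + K1" "pd \<rho>1" "pd P1" "madj K1 = - K1"
      using x unfolding S_def by blast
    obtain \<rho>2 P2 K2 where 2: "y = \<Psi> \<rho>2 - P2 + K2" "pd \<rho>2" "pd P2" "madj K2 = - K2"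
      using y unfolding S_def by blast
    have "u *\<^sub>R x + v *\<^sub>R y = \<Psi> (u *\<^sub>R \<rho>1 + v *\<^sub>R \<rho>2) - (u *\<^sub>R P1 + v *\<^sub>R P2) + (u *\<^sub>R K1 + v *\<^sub>R K2)"
      unfolding 1 2 L by (simp add: algebra_simps)
    moreover have "madj (u *\<^sub>R K1 + v *\<^sub>R K2) = - (u *\<^sub>R K1 + v *\<^sub>R K2)"
      using 1(4) 2(4) by (simp add: madj_add madj_scaleR)
    ultimately show "u *\<^sub>R x + v *\<^sub>R y \<in> S"
      using memS pd_comb 1(2,3) 2(2,3) uv by metis
  qed
  have hPsi: "\<Psi> (madj X) = madj (\<Psi> X)" for X using hp unfolding herm_pres_def by blast
  have zS: "0 \<notin> S"
  proof
    assume "0 \<in> S"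
    then obtain \<rho> P K where e: "0 = \<Psi> \<rho> - P + K" "pd \<rho>" "pd P" "madj K = - K"
      unfolding S_def by blast
    have hr: "madj \<rho> = \<rho>" using e(2) pd_herm herm_madj by blast
    have hP: "madj P = P" using e(3) pd_herm herm_madj by blast
    have K: "K = P - \<Psi> \<rho>" using e(1) by (simp add: algebra_simps)
    have "madj (\<Psi> \<rho>) = \<Psi> \<rho>" using hPsi[of \<rho>] hr by simp
    then have "madj K = K" unfolding K madj_diff hP by simp
    then have KK: "K = - K" using e(4) by simp
    have "K$i$j = 0" for i j
    proof -
      have "K$i$j = - K$i$j" using KK by (metis vector_uminus_component)
      then show ?thesis by (simp add: complex_eq_iff)
    qed
    then have "K = 0" by (simp add: vec_eq_iff)
    then have PP: "\<Psi> \<rho> = P" using K by simp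
    define \<tau> where "\<tau> = Re (mtrace \<rho>)"
    have tau: "\<tau> > 0" "mtrace \<rho> = of_real \<tau>"
      using mtrace_pd[OF e(2)] unfolding \<tau>_def by (simp_all add: complex_eq_iff)
    define \<rho>' where "\<rho>' = (1 / \<tau>) *\<^sub>R \<rho>"
    have p1: "pd \<rho>'" unfolding \<rho>'_def using pd_scale[OF e(2)] tau by simp
    have p2: "pd (\<Psi> \<rho>')" unfolding \<rho>'_def L PP using pd_scale[OF e(3)] tau by simp
    have t1: "mtrace \<rho>' = 1" unfolding \<rho>'_def mtrace_scaleR tau(2) using tau(1)
      by (simp flip: of_real_mult)
    have t2: "mtrace (\<Psi> \<rho>') = 1" using tp t1 unfolding trace_pres_def by simp
    have "density \<rho>' \<and> invertible \<rho>' \<and> density (\<Psi> \<rho>') \<and> invertible (\<Psi> \<rho>')"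
      unfolding density_def using p1 p2 t1 t2 pd_psd[OF p1] pd_psd[OF p2] pd_inv[OF p1] pd_inv[OF p2] by simp
    then have "semi_positive \<Psi>"
      unfolding semi_positive_def by blast
    then show False using nsp by blast
  qed
  obtain a where a: "a \<noteq> 0" "\<forall>x\<in>S. 0 \<le> inner a x"
    using separating_hyperplane_set_0[OF cS zS] by blast
  have pd1m: "pd (mat 1 :: complex^'m^'m)" by (rule pd_mat1)
  have pd1n: "pd (mat 1 :: complex^'n^'n)" by (rule pd_mat1)
  have anti: "inner a K = 0" if K: "madj K = - K" for K
  proof (rule ccontr)
    assume d: "inner a K \<noteq> 0"
    define c0 where "c0 = inner a (\<Psi> (mat 1) - mat 1)"
    define r where "r = - (\<bar>c0\<bar> + 1) / inner a K"
    have "madj (r *\<^sub>R K) = - (r *\<^sub>R K)" using K by (simp add: madj_scaleR)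
    then have "0 \<le> inner a (\<Psi> (mat 1) - mat 1 + r *\<^sub>R K)"
      using a(2) memS[OF pd1n pd1m] by blast
    also have "\<dots> = c0 + r * inner a K" unfolding c0_def by (simp add: inner_add_right)
    also have "\<dots> = c0 - (\<bar>c0\<bar> + 1)" unfolding r_def using d by simp
    finally show False by linarith
  qed
  have ha: "madj a = a"
  proof -
    have "madj (a - madj a) = - (a - madj a)" by (simp add: madj_diff madj_madj)
    then have "inner a (a - madj a) = 0" by (rule anti)
    then have 1: "inner a (madj a) = inner a a" by (simp add: inner_diff_right)
    have 2: "inner (madj a) (madj a) = inner a a" by (rule inner_madj)
    have "inner (a - madj a) (a - madj a) = 0"
      using 1 2 by (simp add: inner_diff_left inner_diff_right inner_commute)
    then show ?thesis by simp
  qed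
  define Z where "Z = - a"
  have hZ: "herm Z" unfolding Z_def herm_madj madj_neg ha ..
  have Znz: "Z \<noteq> 0" using a(1) Z_def by simp
  have base: "inner a P \<le> inner a (\<Psi> \<rho>)" if "pd \<rho>" "pd P" for \<rho> P
  proof -
    have "madj (0::complex^'m^'m) = - 0" by (simp add: madj_zero)
    then have "\<Psi> \<rho> - P + 0 \<in> S" by (rule memS[OF that])
    then have "0 \<le> inner a (\<Psi> \<rho> - P + 0)" using a(2) by blast
    then show ?thesis by (simp add: inner_diff_right)
  qed
  have ZP: "inner Z P \<ge> 0" if "pd P" for P
  proof -
    have "\<forall>r>0. r * inner a P \<le> inner a (\<Psi> (mat 1))"
      using base[OF pd1n pd_scale[OF that]] by simp
    then have "inner a P \<le> 0" by (rule real_L1)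
    then show ?thesis unfolding Z_def by simp
  qed
  have ZR: "inner Z (\<Psi> \<rho>) \<le> 0" if "pd \<rho>" for \<rho>
  proof -
    have "\<forall>e>0. e * inner a (mat 1) \<le> inner a (\<Psi> \<rho>)"
      using base[OF that pd_scale[OF pd1m]] by simp
    then have "inner a (\<Psi> \<rho>) \<ge> 0" by (rule real_L2)
    then show ?thesis unfolding Z_def by simp
  qed
  have psdZ: "psd Z"
    unfolding psd_iff
  proof (intro allI conjI)
    fix x
    show "Im (sf Z x x) = 0" using sf_herm_real[OF hZ] .
    have "\<forall>e>0. e * (- Re (mtrace Z)) \<le> Re (sf Z x x)"
    proof (intro allI impI)
      fix e :: real assume "e > 0"
      then have "0 \<le> inner Z (outer x + e *\<^sub>R mat 1)" using ZP pd_outer_eps by blast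
      then show "e * (- Re (mtrace Z)) \<le> Re (sf Z x x)"
        by (simp add: inner_add_right inner_herm_outer[OF hZ] inner_mat1)
    qed
    then show "Re (sf Z x x) \<ge> 0" by (rule real_L2)
  qed
  define \<tau> where "\<tau> = Re (mtrace Z)"
  have tauI: "Im (mtrace Z) = 0"
    unfolding mtrace_def Im_sum using psd_diag(1)[OF psdZ] by simp
  have tau0: "\<tau> \<ge> 0"
    unfolding \<tau>_def mtrace_def Re_sum using psd_diag(2)[OF psdZ] by (simp add: sum_nonneg)
  have taupos: "\<tau> > 0"
  proof (rule ccontr)
    assume "\<not> \<tau> > 0"
    then have "\<tau> = 0" using tau0 by simp
    then have "\<forall>i\<in>UNIV. Re (Z$i$i) = 0"
      unfolding \<tau>_def mtrace_def Re_sum using psd_diag(2)[OF psdZ]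
      by (subst sum_nonneg_eq_0_iff[symmetric]) auto
    then have "Z$i$i = 0" for i using psd_diag(1)[OF psdZ, of i] by (simp add: complex_eq_iff)
    then have "Z$i$j = 0" for i j using psd_row_zero[OF psdZ] by blast
    then have "Z = 0" by (simp add: vec_eq_iff)
    then show False using Znz by simp
  qed
  have trZ: "mtrace Z = of_real \<tau>" using tauI \<tau>_def by (simp add: complex_eq_iff)
  define \<sigma> where "\<sigma> = (1 / \<tau>) *\<^sub>R Z"
  have dens: "density \<sigma>"
    unfolding density_def \<sigma>_def
    using psd_scale[OF psdZ, of "1/\<tau>"] taupos
    by (simp add: mtrace_scaleR trZ flip: of_real_mult)
  have hs: "madj \<sigma> = \<sigma>" using dens psd_herm herm_madj unfolding density_def by blast
  have "psd (- \<Psi>s \<sigma>)"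
    unfolding psd_iff
  proof (intro allI)
    fix x :: "complex^'n"
    have dual: "mtrace (madj (\<Psi>s \<sigma>) ** outer x) = mtrace (madj \<sigma> ** \<Psi> (outer x))"
      using du unfolding is_dual_map_def by blast
    have hpo: "herm (\<Psi> (outer x))" using herm_Psi[OF hp herm_outer] .
    have hsig: "herm \<sigma>" using hs herm_madj by blast
    have im: "Im (mtrace (madj \<sigma> ** \<Psi> (outer x))) = 0"
      unfolding hs using mtrace_herm_real[OF hsig hpo] .
    have "\<forall>e>0. e * inner Z (\<Psi> (mat 1)) \<le> - inner Z (\<Psi> (outer x))"
    proof (intro allI impI)
      fix e :: real assume "e > 0"
      then have "inner Z (\<Psi> (outer x + e *\<^sub>R mat 1)) \<le> 0" using ZR pd_outer_eps by blast
      then show "e * inner Z (\<Psi> (mat 1)) \<le> - inner Z (\<Psi> (outer x))"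
        by (simp add: L inner_add_right)
    qed
    then have "- inner Z (\<Psi> (outer x)) \<ge> 0" by (rule real_L2)
    then have "inner \<sigma> (\<Psi> (outer x)) \<le> 0"
      unfolding \<sigma>_def using taupos by (simp add: divide_nonpos_pos)
    then have re: "Re (mtrace (madj \<sigma> ** \<Psi> (outer x))) \<le> 0" by (simp add: re_tr_inner)
    have "cnj (sf (\<Psi>s \<sigma>) x x) = mtrace (madj \<sigma> ** \<Psi> (outer x))"
      using dual mtrace_outer_right by metis
    then have "Im (cnj (sf (\<Psi>s \<sigma>) x x)) = 0 \<and> Re (cnj (sf (\<Psi>s \<sigma>) x x)) \<le> 0"
      using im re by simp
    then have "Im (sf (\<Psi>s \<sigma>) x x) = 0 \<and> Re (sf (\<Psi>s \<sigma>) x x) \<le> 0"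
      by simp
    then show "Im (sf (- \<Psi>s \<sigma>) x x) = 0 \<and> 0 \<le> Re (sf (- \<Psi>s \<sigma>) x x)"
      by (simp add: sf_negM)
  qed
  then show ?thesis unfolding semi_nonnegative_def using dens by blast
qed

theorem theorem5:
  fixes \<Psi> :: "complex^'n^'n \<Rightarrow> complex^'m^'m"
    and \<Psi>s :: "complex^'m^'m \<Rightarrow> complex^'n^'n"
  assumes "lin_map \<Psi>" and "herm_pres \<Psi>" and "trace_pres \<Psi>"
    and "is_dual_map \<Psi> \<Psi>s"
  shows "semi_positive \<Psi> \<longleftrightarrow> \<not> semi_nonnegative (\<lambda>Y. - \<Psi>s Y)"
  using exclusive[OF assms(4)] separation[OF assms] by blast

end
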